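(* Let $n\geq 2$ and let $C$ be a $2$-null completely regular code in $G_n$ with covering radius $\rho\geq 2$ and parameter matrix $[a_0,b_0|c_1,a_1,b_1|\ldots|c_\rho,a_\rho]$, such that $\mathbf{0}\in C$. Then every word of type $1100$ that lies in $C_2$ is adjacent to exactly $c_2-2$ words of weight three that lie in $C_1$.
   Context: $G_n$ is the graph with vertex set $\mathbb{Z}^n$ in which $x,y$ are adjacent iff $\sum_{i=1}^n|x_i-y_i|=1$; $d$ is its graph distance, and the weight of $x$ is $d(x,\mathbf{0})=\sum_i|x_i|$, where $\mathbf{0}$ is the all-zero word. For a vertex set $C$ (a code), $\rho=\max_v d(v,C)$ is its covering radius and $C_i=\{v: d(v,C)=i\}$, so $C_0=C$. $C$ is a completely regular code (CRC) if for all $i,j\in\{0,\ldots,\rho\}$ there is a number $\alpha_{ij}$ such that every vertex of $C_i$ has exactly $\alpha_{ij}$ neighbours in $C_j$, and $\alpha_{ij}=0$ whenever $|i-j|>1$. Writing $a_i=\alpha_{ii}$, $b_i=\alpha_{i,i+1}$, $c_i=\alpha_{i,i-1}$, the parameter matrix is written $[a_0,b_0|c_1,a_1,b_1|\ldots|c_\rho,a_\rho]$. A CRC is $r$-null if $a_0=\cdots=a_{r-1}=0$. The type of a word of weight at most four is the sequence of its four largest absolute values of entries, in nonincreasing order (padded by zeros); e.g. type $1100$ means exactly two entries equal $\pm1$ and all others $0$. *)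

theory Defs
  imports Main
begin

text \<open>Vertices of G_n are words x : 'n \<Rightarrow> int, where 'n is a finite index type
  with n = CARD('n) coordinates (so the vertex set is Z^n).\<close>

definition gadj :: "('n::finite \<Rightarrow> int) \<Rightarrow> ('n \<Rightarrow> int) \<Rightarrow> bool" where
  "gadj x y \<longleftrightarrow> (\<Sum>i\<in>UNIV. \<bar>x i - y i\<bar>) = 1"

definition gdist :: "('n::finite \<Rightarrow> int) \<Rightarrow> ('n \<Rightarrow> int) \<Rightarrow> nat" where
  "gdist x y = (LEAST k. (gadj ^^ k) x y)"

definition weight :: "('n::finite \<Rightarrow> int) \<Rightarrow> nat" where
  "weight x = gdist x (\<lambda>_. 0)"

definition dcode :: "('n::finite \<Rightarrow> int) set \<Rightarrow> ('n \<Rightarrow> int) \<Rightarrow> nat" where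
  "dcode C v = Inf (gdist v ` C)"

definition layer :: "('n::finite \<Rightarrow> int) set \<Rightarrow> nat \<Rightarrow> ('n \<Rightarrow> int) set" where
  "layer C i = {v. dcode C v = i}"

definition covering_radius_is :: "('n::finite \<Rightarrow> int) set \<Rightarrow> nat \<Rightarrow> bool" where
  "covering_radius_is C \<rho> \<longleftrightarrow> (\<forall>v. dcode C v \<le> \<rho>) \<and> (\<exists>v. dcode C v = \<rho>)"

definition nbrs_in :: "('n::finite \<Rightarrow> int) \<Rightarrow> ('n \<Rightarrow> int) set \<Rightarrow> nat" where
  "nbrs_in v S = card {w. gadj v w \<and> w \<in> S}"

text \<open>C is a completely regular code with covering radius \<rho> and numbers \<alpha> i j
  (so a_i = \<alpha> i i, b_i = \<alpha> i (i+1), c_i = \<alpha> i (i-1)).\<close>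
definition CRC_with :: "('n::finite \<Rightarrow> int) set \<Rightarrow> nat \<Rightarrow> (nat \<Rightarrow> nat \<Rightarrow> nat) \<Rightarrow> bool" where
  "CRC_with C \<rho> \<alpha> \<longleftrightarrow> C \<noteq> {} \<and> covering_radius_is C \<rho> \<and>
     (\<forall>i\<le>\<rho>. \<forall>j\<le>\<rho>. (\<forall>v\<in>layer C i. nbrs_in v (layer C j) = \<alpha> i j) \<and>
        (1 < \<bar>int i - int j\<bar> \<longrightarrow> \<alpha> i j = 0))"

definition r_null :: "nat \<Rightarrow> (nat \<Rightarrow> nat \<Rightarrow> nat) \<Rightarrow> bool" where
  "r_null r \<alpha> \<longleftrightarrow> (\<forall>i<r. \<alpha> i i = 0)"

definition type1100 :: "('n::finite \<Rightarrow> int) \<Rightarrow> bool" where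
  "type1100 x \<longleftrightarrow> card {i. \<bar>x i\<bar> = 1} = 2 \<and> (\<forall>i. \<bar>x i\<bar> = 1 \<or> x i = 0)"

end

theory Submission imports Defs "HOL-Library.FuncSet" begin

definition l1 :: "('n::finite \<Rightarrow> int) \<Rightarrow> ('n \<Rightarrow> int) \<Rightarrow> int" where
  "l1 x y = (\<Sum>i\<in>UNIV. \<bar>x i - y i\<bar>)"

lemma l1_nonneg: "0 \<le> l1 x y" unfolding l1_def by (simp add: sum_nonneg)

lemma l1_tri: "l1 x z \<le> l1 x y + l1 y z"
  unfolding l1_def sum.distrib[symmetric]
  by (rule sum_mono) (simp add: abs_triangle_ineq[of "x _ - y _" "y _ - z _", simplified] )

lemma walk_lower: "(gadj ^^ k) x y \<Longrightarrow> l1 x y \<le> int k"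
proof (induction k arbitrary: y)
  case 0 then show ?case by (auto simp: l1_def)
next
  case (Suc k)
  from Suc.prems obtain z where "(gadj ^^ k) x z" "gadj z y" by (rule relpowp_Suc_E)
  moreover note Suc.IH[OF \<open>(gadj ^^ k) x z\<close>]
  ultimately have "l1 x z \<le> int k" "l1 z y = 1" by (auto simp: gadj_def l1_def)
  then show ?case using l1_tri[of x y z] by simp
qed

lemma l1_zero: "l1 x y = 0 \<Longrightarrow> x = y"
proof -
  assume "l1 x y = 0"
  then have "\<forall>i\<in>UNIV. \<bar>x i - y i\<bar> = 0" unfolding l1_def
    by (subst sum_nonneg_eq_0_iff[symmetric]) auto
  then show "x = y" by auto
qed

lemma sum_upd: "(\<Sum>k\<in>UNIV. f k) = f i + (\<Sum>k\<in>UNIV-{i}. f k)" for f :: "'n::finite \<Rightarrow> int"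
  by (simp add: sum.remove)

lemma walk_exists: "l1 x y = int m \<Longrightarrow> (gadj ^^ m) x y"
proof (induction m arbitrary: x)
  case 0 then show ?case using l1_zero by simp
next
  case (Suc m)
  have "x \<noteq> y" using Suc.prems by (auto simp: l1_def)
  then obtain i where i: "x i \<noteq> y i" by auto
  define x' where "x' = x(i := x i + sgn (y i - x i))"
  have eq: "(\<Sum>k\<in>UNIV-{i}. \<bar>x k - x' k\<bar>) = 0" by (simp add: x'_def)
  have "gadj x x'" unfolding gadj_def using i
    by (subst sum_upd[of _ i], simp only: eq) (auto simp: x'_def abs_if sgn_if)
  moreover have "l1 x' y = int m"
  proof -
    have e2: "(\<Sum>k\<in>UNIV-{i}. \<bar>x' k - y k\<bar>) = (\<Sum>k\<in>UNIV-{i}. \<bar>x k - y k\<bar>)"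
      by (rule sum.cong) (auto simp: x'_def)
    have "l1 x y = \<bar>x i - y i\<bar> + (\<Sum>k\<in>UNIV-{i}. \<bar>x k - y k\<bar>)" unfolding l1_def by (rule sum_upd)
    moreover have "l1 x' y = \<bar>x' i - y i\<bar> + (\<Sum>k\<in>UNIV-{i}. \<bar>x' k - y k\<bar>)" unfolding l1_def by (rule sum_upd)
    moreover have "\<bar>x' i - y i\<bar> = \<bar>x i - y i\<bar> - 1" using i by (auto simp: x'_def abs_if sgn_if)
    ultimately show ?thesis using e2 Suc.prems by simp
  qed
  ultimately show ?case using Suc.IH by (meson relpowp_Suc_I2)
qed

lemma gdist_l1: "gdist x y = nat (l1 x y)"
  unfolding gdist_def
proof (rule Least_equality)
  show "(gadj ^^ nat (l1 x y)) x y" using walk_exists[of x y "nat (l1 x y)"] l1_nonneg[of x y] by simp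
next
  fix k assume "(gadj ^^ k) x y"
  then show "nat (l1 x y) \<le> k" using walk_lower by fastforce
qed

lemma weight_eq: "weight w = nat (\<Sum>k\<in>UNIV. \<bar>w k\<bar>)"
  by (simp add: weight_def gdist_l1 l1_def)

lemma par: "even (\<bar>a\<bar> + \<bar>b\<bar> + \<bar>a - b\<bar>)" for a b :: int
  by (auto simp: abs_if)

lemma sum2: "i \<noteq> j \<Longrightarrow> (\<forall>k. k \<noteq> i \<and> k \<noteq> j \<longrightarrow> f k = 0) \<Longrightarrow> (\<Sum>k\<in>UNIV. f k) = f i + (f j :: int)"
  for f :: "'n::finite \<Rightarrow> int"
proof -
  assume a: "i \<noteq> j" "\<forall>k. k \<noteq> i \<and> k \<noteq> j \<longrightarrow> f k = 0"
  have "(\<Sum>k\<in>UNIV. f k) = (\<Sum>k\<in>{i,j}. f k)"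
    by (rule sum.mono_neutral_right) (use a in auto)
  then show ?thesis using a by simp
qed


lemma dcode_le: "(\<lambda>_. 0) \<in> C \<Longrightarrow> dcode C w \<le> weight w"
  unfolding dcode_def weight_def by (rule cInf_lower) auto

lemma nbr_finite: "finite {w. gadj x w \<and> P w}"
proof -
  have "{w. gadj x w \<and> P w} \<subseteq> Pi UNIV (\<lambda>k. {x k - 1 .. x k + 1})"
  proof
    fix w assume "w \<in> {w. gadj x w \<and> P w}"
    then have s: "(\<Sum>i\<in>UNIV. \<bar>x i - w i\<bar>) = 1" by (simp add: gadj_def)
    have "w k \<in> {x k - 1 .. x k + 1}" for k
    proof -
      have "\<bar>x k - w k\<bar> \<le> (\<Sum>i\<in>UNIV. \<bar>x i - w i\<bar>)"
        by (rule member_le_sum) auto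
      then show "w k \<in> {x k - 1 .. x k + 1}" using s by auto
    qed
    then show "w \<in> Pi UNIV (\<lambda>k. {x k - 1 .. x k + 1})" by (simp add: Pi_def)
  qed
  moreover have "finite (Pi UNIV (\<lambda>k. {x k - 1 .. x k + 1}))"
    using finite_PiE[of UNIV "\<lambda>k. {x k - 1 .. x k + 1}"] by (simp add: PiE_UNIV_domain)
  ultimately show ?thesis by (rule finite_subset)
qed

theorem mainTheorem1:
  fixes C :: "('n::finite \<Rightarrow> int) set" and \<rho> :: nat and \<alpha> :: "nat \<Rightarrow> nat \<Rightarrow> nat"
  assumes "card (UNIV :: 'n set) \<ge> 2"
    and "CRC_with C \<rho> \<alpha>"
    and "r_null 2 \<alpha>"
    and "\<rho> \<ge> 2"
    and "(\<lambda>_. 0) \<in> C"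
  shows "\<forall>x. type1100 x \<and> x \<in> layer C 2 \<longrightarrow>
           int (card {w. gadj x w \<and> weight w = 3 \<and> w \<in> layer C 1}) = int (\<alpha> 2 1) - 2"
proof (intro allI impI)
  fix x :: "'n \<Rightarrow> int"
  assume "type1100 x \<and> x \<in> layer C 2"
  then have t: "card {i. \<bar>x i\<bar> = 1} = 2" "\<forall>i. \<bar>x i\<bar> = 1 \<or> x i = 0" and x2: "x \<in> layer C 2"
    by (auto simp: type1100_def)
  obtain i j where ij: "{i. \<bar>x i\<bar> = 1} = {i, j}" "i \<noteq> j" using t(1) card_2_iff by metis
  have xi: "\<bar>x i\<bar> = 1" "\<bar>x j\<bar> = 1" using ij by auto
  have x0: "\<forall>k. k \<noteq> i \<and> k \<noteq> j \<longrightarrow> x k = 0" using ij t(2) by auto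
  have crc: "\<And>a b v. a \<le> \<rho> \<Longrightarrow> b \<le> \<rho> \<Longrightarrow> v \<in> layer C a \<Longrightarrow> nbrs_in v (layer C b) = \<alpha> a b"
    and crc0: "\<And>a b. a \<le> \<rho> \<Longrightarrow> b \<le> \<rho> \<Longrightarrow> 1 < \<bar>int a - int b\<bar> \<Longrightarrow> \<alpha> a b = 0"
    using assms(2) unfolding CRC_with_def by blast+
  have a20: "\<alpha> 2 0 = 0" using crc0[of 2 0] assms(4) by simp
  have n20: "nbrs_in x (layer C 0) = 0" using crc[of 2 0 x] assms(4) x2 a20 by simp
  have n21: "nbrs_in x (layer C 1) = \<alpha> 2 1" using crc[of 2 1 x] assms(4) x2 by simp
  have Wx: "(\<Sum>k\<in>UNIV. \<bar>x k\<bar>) = 2" using sum2[OF ij(2), of "\<lambda>k. \<bar>x k\<bar>"] x0 xi by simp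
  define w1 where "w1 = x(i := 0)"
  define w2 where "w2 = x(j := 0)"
  have w12: "w1 \<noteq> w2" using ij(2) xi unfolding w1_def w2_def by (metis fun_upd_apply zero_neq_one abs_zero)
  have adj1: "gadj x w1" unfolding gadj_def
    using sum2[OF ij(2), of "\<lambda>k. \<bar>x k - w1 k\<bar>"] xi ij(2) by (simp add: w1_def)
  have adj2: "gadj x w2" unfolding gadj_def
    using sum2[OF ij(2), of "\<lambda>k. \<bar>x k - w2 k\<bar>"] xi ij(2) by (simp add: w2_def)
  have W1: "weight w1 = 1" unfolding weight_eq
    using sum2[OF ij(2), of "\<lambda>k. \<bar>w1 k\<bar>"] xi ij(2) x0 by (simp add: w1_def)
  have W2: "weight w2 = 1" unfolding weight_eq
    using sum2[OF ij(2), of "\<lambda>k. \<bar>w2 k\<bar>"] xi ij(2) x0 by (simp add: w2_def)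
  have inL1: "w \<in> layer C 1" if "gadj x w" "weight w = 1" for w
  proof -
    have "dcode C w \<le> 1" using dcode_le[OF assms(5), of w] that by simp
    moreover have "dcode C w \<noteq> 0"
    proof
      assume "dcode C w = 0"
      then have "w \<in> {w. gadj x w \<and> w \<in> layer C 0}" using that by (simp add: layer_def)
      then have "{w. gadj x w \<and> w \<in> layer C 0} \<noteq> {}" by blast
      then have "card {w. gadj x w \<and> w \<in> layer C 0} \<noteq> 0"
        using nbr_finite[of x "\<lambda>w. w \<in> layer C 0"] by (simp only: card_eq_0_iff) simp
      then show False using n20 by (simp add: nbrs_in_def)
    qed
    ultimately show ?thesis by (simp add: layer_def)
  qed
  have other: "w = w1 \<or> w = w2" if "gadj x w" "weight w \<noteq> 3" for w
  proof -
    have d: "(\<Sum>k\<in>UNIV. \<bar>x k - w k\<bar>) = 1" using that(1) by (simp add: gadj_def)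
    have lo: "(\<Sum>k\<in>UNIV. \<bar>x k\<bar>) \<le> (\<Sum>k\<in>UNIV. \<bar>w k\<bar>) + (\<Sum>k\<in>UNIV. \<bar>x k - w k\<bar>)"
      unfolding sum.distrib[symmetric] by (rule sum_mono) linarith
    have hi: "(\<Sum>k\<in>UNIV. \<bar>w k\<bar>) \<le> (\<Sum>k\<in>UNIV. \<bar>x k\<bar>) + (\<Sum>k\<in>UNIV. \<bar>x k - w k\<bar>)"
      unfolding sum.distrib[symmetric] by (rule sum_mono) linarith
    have ev: "even ((\<Sum>k\<in>UNIV. \<bar>w k\<bar>) + (\<Sum>k\<in>UNIV. \<bar>x k\<bar>) + (\<Sum>k\<in>UNIV. \<bar>x k - w k\<bar>))"
      unfolding sum.distrib[symmetric]
      by (rule dvd_sum) (metis par abs_minus_commute add.commute)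
    have "(\<Sum>k\<in>UNIV. \<bar>w k\<bar>) \<noteq> 3" using that(2) by (simp add: weight_eq)
    then have W: "(\<Sum>k\<in>UNIV. \<bar>w k\<bar>) = 1" using lo hi ev d Wx by presburger
    have "(\<Sum>k\<in>UNIV. \<bar>w k\<bar> + \<bar>x k - w k\<bar> - \<bar>x k\<bar>) = 0"
      using W d Wx by (simp add: sum.distrib sum_subtractf)
    then have eqk: "\<forall>k\<in>UNIV. \<bar>w k\<bar> + \<bar>x k - w k\<bar> - \<bar>x k\<bar> = 0"
      by (subst sum_nonneg_eq_0_iff[symmetric]) auto
    have wo: "\<forall>k. k \<noteq> i \<and> k \<noteq> j \<longrightarrow> w k = 0"
    proof (intro allI impI)
      fix k assume "k \<noteq> i \<and> k \<noteq> j"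
      then have "x k = 0" using x0 by blast
      moreover have "\<bar>w k\<bar> + \<bar>x k - w k\<bar> - \<bar>x k\<bar> = 0" using eqk by blast
      ultimately show "w k = 0" by simp
    qed
    have wi: "w i = 0 \<or> w i = x i"
    proof -
      have "\<bar>w i\<bar> + \<bar>x i - w i\<bar> - \<bar>x i\<bar> = 0" using eqk by blast
      then show ?thesis using xi by (auto simp: abs_if split: if_splits)
    qed
    have wj: "w j = 0 \<or> w j = x j"
    proof -
      have "\<bar>w j\<bar> + \<bar>x j - w j\<bar> - \<bar>x j\<bar> = 0" using eqk by blast
      then show ?thesis using xi by (auto simp: abs_if split: if_splits)
    qed
    have "\<bar>w i\<bar> + \<bar>w j\<bar> = 1" using sum2[OF ij(2), of "\<lambda>k. \<bar>w k\<bar>"] wo W by simp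
    then have "(w i = 0 \<and> w j = x j) \<or> (w j = 0 \<and> w i = x i)" using wi wj xi by auto
    then show ?thesis
    proof
      assume h: "w i = 0 \<and> w j = x j"
      have "w = w1" unfolding w1_def
      proof
        fix k show "w k = (x(i := 0)) k" using h wo x0 by (cases "k = i"; cases "k = j") auto
      qed
      then show ?thesis ..
    next
      assume h: "w j = 0 \<and> w i = x i"
      have "w = w2" unfolding w2_def
      proof
        fix k show "w k = (x(j := 0)) k" using h wo x0 by (cases "k = i"; cases "k = j") auto
      qed
      then show ?thesis ..
    qed
  qed
  let ?S = "{w. gadj x w \<and> w \<in> layer C 1}"
  let ?S3 = "{w. gadj x w \<and> weight w = 3 \<and> w \<in> layer C 1}"
  have "?S = ?S3 \<union> {w1, w2}"
    using other adj1 adj2 W1 W2 inL1 by auto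
  moreover have "?S3 \<inter> {w1, w2} = {}" using W1 W2 by auto
  moreover have "finite ?S3" using nbr_finite[of x "\<lambda>w. weight w = 3 \<and> w \<in> layer C 1"] by simp
  ultimately have "card ?S = card ?S3 + 2" using w12 by (simp add: card_Un_disjoint)
  moreover have "card ?S = \<alpha> 2 1" using n21 by (simp add: nbrs_in_def)
  ultimately show "int (card ?S3) = int (\<alpha> 2 1) - 2" by simp
qed

end
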